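(* Let $\pi_1,\pi_2,\pi_3,\pi_4$ be permutations of $[8]=\{1,\dots,8\}$. Call a permutation $\sigma$ of $[8]$ bad if there is no permutation $\tau$ of $[8]$ that is simultaneously a derangement of each of $\pi_1,\pi_2,\pi_3,\pi_4,\sigma$. Then there are at most $96$ bad permutations. Moreover, if there are more than $24$ bad permutations, then there exist a permutation $\sigma_0$ of $[8]$ and a set $I\subseteq[8]$ with $|I|=5$ such that every bad permutation $\tau$ satisfies $\tau(i)=\sigma_0(i)$ for at least four elements $i\in I$.
   Context: A permutation $\tau$ of $[k]$ is a derangement of a permutation $\pi$ of $[k]$ if $\tau(i)\neq\pi(i)$ for every $i\in[k]$. *)

theory Defs
  imports "HOL-Combinatorics.Permutations"
begin

definition is_derangement_of :: "nat \<Rightarrow> (nat \<Rightarrow> nat) \<Rightarrow> (nat \<Rightarrow> nat) \<Rightarrow> bool" where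
  "is_derangement_of k \<tau> \<pi> \<longleftrightarrow> (\<forall>i\<in>{1..k}. \<tau> i \<noteq> \<pi> i)"

definition bad_perm :: "(nat \<Rightarrow> nat) \<Rightarrow> (nat \<Rightarrow> nat) \<Rightarrow> (nat \<Rightarrow> nat) \<Rightarrow> (nat \<Rightarrow> nat) \<Rightarrow> (nat \<Rightarrow> nat) \<Rightarrow> bool" where
  "bad_perm \<pi>1 \<pi>2 \<pi>3 \<pi>4 \<sigma> \<longleftrightarrow> \<sigma> permutes {1..8} \<and>
     \<not> (\<exists>\<tau>. \<tau> permutes {1..8} \<and> is_derangement_of 8 \<tau> \<pi>1 \<and> is_derangement_of 8 \<tau> \<pi>2
          \<and> is_derangement_of 8 \<tau> \<pi>3 \<and> is_derangement_of 8 \<tau> \<pi>4 \<and> is_derangement_of 8 \<tau> \<sigma>)"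

end

theory Submission
  imports Defs
begin



abbreviation A8 :: "nat set" where "A8 \<equiv> {1..8}"

definition rowsZ :: "(nat \<Rightarrow> nat \<Rightarrow> bool) \<Rightarrow> nat \<Rightarrow> nat set" where
  "rowsZ Z i = {c\<in>A8. Z i c}"
definition colZ :: "(nat \<Rightarrow> nat \<Rightarrow> bool) \<Rightarrow> nat \<Rightarrow> nat set" where
  "colZ Z c = {i\<in>A8. Z i c}"
definition rc :: "(nat \<Rightarrow> nat \<Rightarrow> bool) \<Rightarrow> bool" where
  "rc Z \<longleftrightarrow> (\<forall>i\<in>A8. card (rowsZ Z i) \<le> 4)"
definition cc :: "(nat \<Rightarrow> nat \<Rightarrow> bool) \<Rightarrow> bool" where
  "cc Z \<longleftrightarrow> (\<forall>c\<in>A8. card (colZ Z c) \<le> 4)"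
definition witA :: "(nat \<Rightarrow> nat \<Rightarrow> bool) \<Rightarrow> (nat \<Rightarrow> nat) \<Rightarrow> nat set \<Rightarrow> nat set \<Rightarrow> bool" where
  "witA Z \<sigma> S U \<longleftrightarrow> S \<subseteq> A8 \<and> U \<subseteq> A8 \<and> card S = 4 \<and> card U = 5 \<and> (\<forall>s\<in>S. \<forall>u\<in>U. Z s u \<or> \<sigma> s = u)"
definition witB :: "(nat \<Rightarrow> nat \<Rightarrow> bool) \<Rightarrow> (nat \<Rightarrow> nat) \<Rightarrow> nat set \<Rightarrow> nat set \<Rightarrow> bool" where
  "witB Z \<sigma> K V \<longleftrightarrow> K \<subseteq> A8 \<and> V \<subseteq> A8 \<and> card K = 4 \<and> card V = 5 \<and> (\<forall>c\<in>K. \<forall>v\<in>V. Z v c \<or> \<sigma> v = c)"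
definition WW :: "(nat \<Rightarrow> nat \<Rightarrow> bool) \<Rightarrow> (nat \<Rightarrow> nat) set" where
  "WW Z = {\<sigma>. \<sigma> permutes A8 \<and> (\<exists>S U. witA Z \<sigma> S U \<or> witB Z \<sigma> S U)}"
definition tr :: "(nat \<Rightarrow> nat \<Rightarrow> bool) \<Rightarrow> (nat \<Rightarrow> nat \<Rightarrow> bool)" where
  "tr Z = (\<lambda>i c. Z c i)"

lemma tr_simps: "rowsZ (tr Z) i = colZ Z i" "colZ (tr Z) i = rowsZ Z i" "rc (tr Z) = cc Z" "cc (tr Z) = rc Z"
  "tr (tr Z) = Z"
  by (auto simp: rowsZ_def colZ_def rc_def cc_def tr_def)

lemma witB_tr: assumes "\<sigma> permutes A8" "witB Z \<sigma> K V" shows "witA (tr Z) (inv \<sigma>) K V"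
  using assms unfolding witA_def witB_def tr_def
  by (metis permutes_inv_eq)

lemma witA_tr: assumes "\<sigma> permutes A8" "witA Z \<sigma> K V" shows "witB (tr Z) (inv \<sigma>) K V"
  using assms unfolding witA_def witB_def tr_def
  by (metis permutes_inv_eq)

lemma WW_tr: assumes "\<sigma> \<in> WW Z" shows "inv \<sigma> \<in> WW (tr Z)"
proof -
  have p: "\<sigma> permutes A8" and "\<exists>S U. witA Z \<sigma> S U \<or> witB Z \<sigma> S U" using assms unfolding WW_def by auto
  then obtain S U where "witA Z \<sigma> S U \<or> witB Z \<sigma> S U" by blast
  then have "witB (tr Z) (inv \<sigma>) S U \<or> witA (tr Z) (inv \<sigma>) S U"
    using witA_tr[OF p] witB_tr[OF p] by blast
  then show ?thesis unfolding WW_def using permutes_inv[OF p] by blast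
qed

lemma rowA:
  assumes "rc Z" "witA Z \<sigma> S U" "s \<in> S"
  shows "\<sigma> s \<in> U \<and> rowsZ Z s = U - {\<sigma> s}"
proof -
  have sA: "s \<in> A8" and UA: "U \<subseteq> A8" and cU: "card U = 5" and W: "\<forall>u\<in>U. Z s u \<or> \<sigma> s = u"
    using assms unfolding witA_def by auto
  have fin: "finite (rowsZ Z s)" unfolding rowsZ_def by auto
  have c4: "card (rowsZ Z s) \<le> 4" using assms(1) sA unfolding rc_def by auto
  have "\<not> U \<subseteq> rowsZ Z s"
  proof
    assume "U \<subseteq> rowsZ Z s"
    then have "card U \<le> card (rowsZ Z s)" using fin card_mono by blast
    then show False using cU c4 by simp
  qed
  then obtain u where u: "u \<in> U" "\<not> Z s u" using UA unfolding rowsZ_def by auto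
  then have su: "\<sigma> s = u" using W by auto
  have sub: "U - {\<sigma> s} \<subseteq> rowsZ Z s" using W UA unfolding rowsZ_def by auto
  have cc4: "card (U - {\<sigma> s}) = 4" using cU su u(1) by (simp add: card_Diff_singleton_if)
  have "U - {\<sigma> s} = rowsZ Z s"
    by (rule card_subset_eq[OF fin sub]) (metis cc4 c4 card_mono[OF fin sub] le_antisym)
  then show ?thesis using su u by auto
qed

lemma colB:
  assumes "cc Z" "\<sigma> permutes A8" "witB Z \<sigma> K V" "c \<in> K"
  shows "inv \<sigma> c \<in> V \<and> colZ Z c = V - {inv \<sigma> c}"
  using rowA[of "tr Z" "inv \<sigma>" K V c] witB_tr[OF assms(2,3)] assms(1,4) by (simp add: tr_simps)




lemma fin_colZ: "finite (colZ Z u)" unfolding colZ_def by auto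
lemma fin_rowsZ: "finite (rowsZ Z u)" unfolding rowsZ_def by auto

lemma card_ins2: "finite X \<Longrightarrow> card (insert a (insert b X)) \<le> card X + 2"
  by (simp add: card_insert_if)

lemma two_elems: assumes "2 \<le> card X" shows "\<exists>a\<in>X. \<exists>b\<in>X. a \<noteq> b"
proof (rule ccontr)
  assume "\<not> ?thesis"
  then have "\<forall>a\<in>X. \<forall>b\<in>X. a = b" by blast
  then have "card X \<le> 1" using card_le_Suc0_iff_eq[of X] by (cases "finite X") auto
  then show False using assms by simp
qed

lemma set_diff_lemma:
  assumes "x \<in> U" "y \<in> U1" "U - {x} = U1 - {y}" "U \<noteq> U1"
  shows "U1 - U = {y}"
proof -
  have "y \<notin> U"
  proof
    assume yU: "y \<in> U"
    show False
    proof (cases "y = x")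
      case True
      then have "U = U1" using assms(1,2,3) by (metis insert_Diff)
      then show False using assms(4) by simp
    next
      case False
      then have "y \<in> U - {x}" using yU by simp
      then show False using assms(3) by simp
    qed
  qed
  then show ?thesis using assms by blast
qed

lemma AA:
  assumes rcZ: "rc Z" and ccZ: "cc Z" and p: "\<sigma> permutes A8" and p1: "\<sigma>1 permutes A8"
    and w: "witA Z \<sigma> S U" and w1: "witA Z \<sigma>1 S1 U1"
  shows "U = U1"
proof (rule ccontr)
  assume ne: "U \<noteq> U1"
  have SA: "S \<subseteq> A8" "U \<subseteq> A8" "card S = 4" "card U = 5" and W: "\<forall>s\<in>S. \<forall>u\<in>U. Z s u \<or> \<sigma> s = u"
    using w unfolding witA_def by auto
  have S1A: "S1 \<subseteq> A8" "U1 \<subseteq> A8" "card S1 = 4" "card U1 = 5" and W1: "\<forall>s\<in>S1. \<forall>u\<in>U1. Z s u \<or> \<sigma>1 s = u"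
    using w1 unfolding witA_def by auto
  have fU: "finite U" "finite U1" "finite S" "finite S1" using SA S1A by (meson finite_subset finite_atLeastAtMost)+
  have "card (U \<union> U1) \<le> 8"
    using card_mono[of A8 "U \<union> U1"] SA S1A by auto
  moreover have "card (U \<union> U1) + card (U \<inter> U1) = 10"
    using card_Un_Int[OF fU(1,2)] SA S1A by simp
  ultimately have "U \<inter> U1 \<noteq> {}" by auto
  then obtain u where u: "u \<in> U" "u \<in> U1" by blast
  have uA: "u \<in> A8" using u SA by auto
  have sub: "(S - {inv \<sigma> u}) \<union> (S1 - {inv \<sigma>1 u}) \<subseteq> colZ Z u"
  proof
    fix s assume "s \<in> (S - {inv \<sigma> u}) \<union> (S1 - {inv \<sigma>1 u})"
    then show "s \<in> colZ Z u"
    proof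
      assume s: "s \<in> S - {inv \<sigma> u}"
      then have "\<sigma> s \<noteq> u" using s permutes_inv_eq[OF p, of u s] by auto
      then have "Z s u" using W s u by auto
      then show ?thesis using s SA unfolding colZ_def by auto
    next
      assume s: "s \<in> S1 - {inv \<sigma>1 u}"
      then have "\<sigma>1 s \<noteq> u" using s permutes_inv_eq[OF p1, of u s] by auto
      then have "Z s u" using W1 s u by auto
      then show ?thesis using s S1A unfolding colZ_def by auto
    qed
  qed
  have "card (colZ Z u) \<le> 4" using ccZ uA unfolding cc_def by auto
  then have c1: "card ((S - {inv \<sigma> u}) \<union> (S1 - {inv \<sigma>1 u})) \<le> 4"
    using card_mono[OF fin_colZ sub] by linarith
  have "S \<union> S1 \<subseteq> insert (inv \<sigma> u) (insert (inv \<sigma>1 u) ((S - {inv \<sigma> u}) \<union> (S1 - {inv \<sigma>1 u})))" by blast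
  then have "card (S \<union> S1) \<le> card (insert (inv \<sigma> u) (insert (inv \<sigma>1 u) ((S - {inv \<sigma> u}) \<union> (S1 - {inv \<sigma>1 u}))))"
    using fU by (intro card_mono) auto
  also have "\<dots> \<le> card ((S - {inv \<sigma> u}) \<union> (S1 - {inv \<sigma>1 u})) + 2"
    using card_ins2[of "(S - {inv \<sigma> u}) \<union> (S1 - {inv \<sigma>1 u})"] fU by auto
  also have "\<dots> \<le> 6" using c1 by linarith
  finally have "card (S \<union> S1) \<le> 6" .
  moreover have "card (S \<union> S1) + card (S \<inter> S1) = 8" using card_Un_Int[OF fU(3,4)] SA S1A by simp
  ultimately have "2 \<le> card (S \<inter> S1)" by linarith
  then obtain s s' where ss: "s \<in> S \<inter> S1" "s' \<in> S \<inter> S1" "s \<noteq> s'" using two_elems by blast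
  have key: "U1 - U = {\<sigma>1 t}" if "t \<in> S \<inter> S1" for t
  proof -
    have a: "\<sigma> t \<in> U \<and> rowsZ Z t = U - {\<sigma> t}" using rowA[OF rcZ w] that by auto
    have b: "\<sigma>1 t \<in> U1 \<and> rowsZ Z t = U1 - {\<sigma>1 t}" using rowA[OF rcZ w1] that by auto
    show ?thesis using set_diff_lemma[of "\<sigma> t" U "\<sigma>1 t" U1] a b ne by auto
  qed
  have "\<sigma>1 s = \<sigma>1 s'" using key[OF ss(1)] key[OF ss(2)] by auto
  then show False using ss(3) permutes_inj[OF p1] by (metis injD)
qed




lemma fin8: "X \<subseteq> A8 \<Longrightarrow> finite X" by (meson finite_subset finite_atLeastAtMost)

lemma inter_ne: assumes "X \<subseteq> A8" "Y \<subseteq> A8" "card X + card Y > 8" shows "X \<inter> Y \<noteq> {}"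
proof
  assume e: "X \<inter> Y = {}"
  have "card (X \<union> Y) \<le> 8" using card_mono[of A8 "X \<union> Y"] assms by auto
  moreover have "card (X \<union> Y) = card X + card Y" using card_Un_disjoint[OF fin8 fin8 e] assms by auto
  ultimately show False using assms by simp
qed

lemma card_le1: "X \<subseteq> {a} \<Longrightarrow> card X \<le> 1"
  using card_mono[of "{a}" X] by simp

lemma mixed:
  assumes rcZ: "rc Z" and ccZ: "cc Z" and p1: "\<sigma>1 permutes A8" and p2: "\<sigma>2 permutes A8"
    and w1: "witA Z \<sigma>1 S1 U" and w2: "witB Z \<sigma>2 K V"
  shows "S1 \<subseteq> V \<and> K \<subseteq> U"
proof -
  have S1A: "S1 \<subseteq> A8" "U \<subseteq> A8" "card S1 = 4" "card U = 5" using w1 unfolding witA_def by auto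
  have KA: "K \<subseteq> A8" "V \<subseteq> A8" "card K = 4" "card V = 5" using w2 unfolding witB_def by auto
  have A1: "\<sigma>1 s \<in> U \<and> rowsZ Z s = U - {\<sigma>1 s}" if "s \<in> S1" for s using rowA[OF rcZ w1 that] .
  have B1: "inv \<sigma>2 c \<in> V \<and> colZ Z c = V - {inv \<sigma>2 c}" if "c \<in> K" for c using colB[OF ccZ p2 w2 that] .
  have cl1: "K \<inter> U \<subseteq> {\<sigma>1 s}" if "s \<in> S1 - V" for s
  proof
    fix c assume c: "c \<in> K \<inter> U"
    show "c \<in> {\<sigma>1 s}"
    proof (rule ccontr)
      assume "c \<notin> {\<sigma>1 s}"
      then have "c \<in> rowsZ Z s" using A1[of s] that c by auto
      then have "Z s c" unfolding rowsZ_def by auto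
      then have "s \<in> colZ Z c" using that S1A unfolding colZ_def by auto
      then show False using B1[of c] c that by auto
    qed
  qed
  have cl2: "S1 \<inter> V \<subseteq> {inv \<sigma>2 c}" if "c \<in> K - U" for c
  proof
    fix s assume s: "s \<in> S1 \<inter> V"
    show "s \<in> {inv \<sigma>2 c}"
    proof (rule ccontr)
      assume "s \<notin> {inv \<sigma>2 c}"
      then have "s \<in> colZ Z c" using B1[of c] that s by auto
      then have "Z s c" unfolding colZ_def by auto
      have "c \<in> A8" using that KA by auto
      then have "c \<in> rowsZ Z s" using \<open>Z s c\<close> unfolding rowsZ_def by auto
      then show False using A1[of s] s that by auto
    qed
  qed
  have KU: "K \<inter> U \<noteq> {}" using inter_ne[of K U] KA S1A by simp
  have "S1 \<subseteq> V"
  proof (rule ccontr)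
    assume "\<not> S1 \<subseteq> V"
    then obtain s where s: "s \<in> S1 - V" by blast
    have "card (K \<inter> U) \<le> 1" by (rule card_le1[OF cl1[OF s]])
    have "\<not> K \<subseteq> U"
    proof
      assume "K \<subseteq> U" then have "K \<inter> U = K" by blast
      then show False using \<open>card (K \<inter> U) \<le> 1\<close> KA by simp
    qed
    then obtain c where c: "c \<in> K - U" by blast
    have "card (S1 \<inter> V) \<le> 1" by (rule card_le1[OF cl2[OF c]])
    moreover have "card (S1 \<inter> V) + card (S1 - V) = 4" using card_Int_Diff[OF fin8[OF S1A(1)]] S1A by simp
    ultimately have "2 \<le> card (S1 - V)" by linarith
    then obtain a b where ab: "a \<in> S1 - V" "b \<in> S1 - V" "a \<noteq> b" using two_elems by blast
    obtain d where d: "d \<in> K \<inter> U" using KU by blast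
    have "\<sigma>1 a = \<sigma>1 b" using cl1[OF ab(1)] cl1[OF ab(2)] d by auto
    then show False using ab(3) permutes_inj[OF p1] by (metis injD)
  qed
  moreover have "K \<subseteq> U"
  proof (rule ccontr)
    assume "\<not> K \<subseteq> U"
    then obtain c where c: "c \<in> K - U" by blast
    have "card (S1 \<inter> V) \<le> 1" by (rule card_le1[OF cl2[OF c]])
    then show False using \<open>S1 \<subseteq> V\<close> S1A by (simp add: Int_absorb2)
  qed
  ultimately show ?thesis by blast
qed

context
  fixes Z \<sigma>1 S1 U
  assumes rcZ: "rc Z" and ccZ: "cc Z" and p1: "\<sigma>1 permutes A8" and w1: "witA Z \<sigma>1 S1 U"
begin

lemma S1facts: "S1 \<subseteq> A8" "U \<subseteq> A8" "card S1 = 4" "card U = 5" using w1 unfolding witA_def by auto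

lemma img_sub: "\<sigma>1 ` S1 \<subseteq> U" using rowA[OF rcZ w1] by auto

lemma card_img: "card (\<sigma>1 ` S1) = 4"
  using card_image[OF inj_on_subset[OF permutes_inj[OF p1]]] S1facts by auto

lemma exists_u: "\<exists>u. U - \<sigma>1 ` S1 = {u}"
proof -
  have "card (U - \<sigma>1 ` S1) = 1"
    using card_Diff_subset[OF finite_imageI[OF fin8[OF S1facts(1)]] img_sub] card_img S1facts by simp
  then show ?thesis using card_1_singletonE by blast
qed

lemma Col_in: assumes "s \<in> S1" "c \<in> U" "c \<noteq> \<sigma>1 s" shows "s \<in> colZ Z c"
  using rowA[OF rcZ w1 assms(1)] assms S1facts unfolding rowsZ_def colZ_def by auto

lemma hole_extra:
  assumes x: "x \<in> A8" "x \<notin> S1" and y: "y \<in> U" and r: "rowsZ Z x = U - {y}"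
  shows "y \<notin> \<sigma>1 ` S1"
proof
  assume yi: "y \<in> \<sigma>1 ` S1"
  obtain u where u: "U - \<sigma>1 ` S1 = {u}" using exists_u by blast
  have yu: "y \<noteq> u" using yi u by auto
  have uU: "u \<in> U" using u by auto
  have "insert x S1 \<subseteq> colZ Z u"
  proof
    fix t assume "t \<in> insert x S1"
    then show "t \<in> colZ Z u"
    proof
      assume "t = x" then show ?thesis using r yu uU x unfolding rowsZ_def colZ_def by auto
    next
      assume t: "t \<in> S1"
      have "u \<noteq> \<sigma>1 t" using u t by auto
      then show ?thesis using Col_in[OF t uU] by auto
    qed
  qed
  then have "card (insert x S1) \<le> card (colZ Z u)" by (rule card_mono[OF fin_colZ])
  moreover have "card (colZ Z u) \<le> 4" using ccZ uU S1facts unfolding cc_def by auto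
  ultimately have "card (insert x S1) \<le> 4" by linarith
  then show False using x S1facts fin8 by simp
qed

lemma unique_extra:
  assumes x: "x \<in> A8" "x \<notin> S1" and y: "y \<in> U" and r: "rowsZ Z x = U - {y}"
    and x': "x' \<in> A8" "x' \<notin> S1" and y': "y' \<in> U" and r': "rowsZ Z x' = U - {y'}"
  shows "x = x'"
proof (rule ccontr)
  assume xx: "x \<noteq> x'"
  have "S1 \<noteq> {}" using S1facts by auto
  then obtain s where s: "s \<in> S1" by blast
  let ?c = "\<sigma>1 s"
  have cU: "?c \<in> U" using img_sub s by auto
  have cy: "?c \<noteq> y" "?c \<noteq> y'" using hole_extra[OF x y r] hole_extra[OF x' y' r'] s by auto
  have "insert x (insert x' (S1 - {s})) \<subseteq> colZ Z ?c"
  proof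
    fix t assume "t \<in> insert x (insert x' (S1 - {s}))"
    then consider "t = x" | "t = x'" | "t \<in> S1 - {s}" by blast
    then show "t \<in> colZ Z ?c"
    proof cases
      case 1 then show ?thesis using r cy cU x unfolding rowsZ_def colZ_def by auto
    next
      case 2 then show ?thesis using r' cy cU x' unfolding rowsZ_def colZ_def by auto
    next
      case 3
      then have "?c \<noteq> \<sigma>1 t" using permutes_inj[OF p1] s by (metis DiffE injD singletonI)
      then show ?thesis using Col_in[of t ?c] 3 cU by auto
    qed
  qed
  then have "card (insert x (insert x' (S1 - {s}))) \<le> card (colZ Z ?c)" by (rule card_mono[OF fin_colZ])
  moreover have "card (colZ Z ?c) \<le> 4" using ccZ cU S1facts unfolding cc_def by auto
  ultimately have le: "card (insert x (insert x' (S1 - {s}))) \<le> 4" by linarith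
  have "card (S1 - {s}) = 3" using S1facts s by simp
  then have "card (insert x (insert x' (S1 - {s}))) = 5" using x x' xx fin8[OF S1facts(1)] by simp
  then show False using le by simp
qed

end



lemma main_core:
  assumes rcZ: "rc Z" and ccZ: "cc Z" and p1: "\<sigma>1 permutes A8" and w1: "witA Z \<sigma>1 S1 U"
  shows "\<exists>\<sigma>0 I. \<sigma>0 permutes A8 \<and> I \<subseteq> A8 \<and> card I = 5 \<and> (\<forall>\<sigma>\<in>WW Z. 4 \<le> card {i\<in>I. \<sigma> i = \<sigma>0 i})"
proof -
  note SF = S1facts[OF rcZ ccZ p1 w1]
  have rct: "rc (tr Z)" "cc (tr Z)" using rcZ ccZ by (simp_all add: tr_simps)
  have "\<exists>x. x \<in> A8 \<and> x \<notin> S1 \<and>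
     (\<forall>\<sigma> S U'. \<sigma> permutes A8 \<longrightarrow> witA Z \<sigma> S U' \<longrightarrow> S \<subseteq> insert x S1) \<and>
     (\<forall>\<sigma> K V. \<sigma> permutes A8 \<longrightarrow> witB Z \<sigma> K V \<longrightarrow> V = insert x S1)"
  proof (cases "\<exists>\<sigma>2 K V. \<sigma>2 permutes A8 \<and> witB Z \<sigma>2 K V")
    case True
    then obtain \<sigma>2 K V where p2: "\<sigma>2 permutes A8" and w2: "witB Z \<sigma>2 K V" by blast
    have VA: "V \<subseteq> A8" "card V = 5" using w2 unfolding witB_def by auto
    have SV: "S1 \<subseteq> V" using mixed[OF rcZ ccZ p1 p2 w1 w2] by blast
    have "card (V - S1) = 1" using card_Diff_subset[OF fin8[OF SF(1)] SV] VA SF by simp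
    then obtain x where x: "V - S1 = {x}" using card_1_singletonE by blast
    have V: "V = insert x S1" using x SV by blast
    show ?thesis
    proof (intro exI conjI allI impI)
      show "x \<in> A8" "x \<notin> S1" using x VA by auto
    next
      fix \<sigma> S U' assume "\<sigma> permutes A8" "witA Z \<sigma> S U'"
      then show "S \<subseteq> insert x S1" using mixed[OF rcZ ccZ _ p2 _ w2] V by blast
    next
      fix \<sigma> K' V' assume p: "\<sigma> permutes A8" and w: "witB Z \<sigma> K' V'"
      have "V' = V" using AA[OF rct permutes_inv[OF p] permutes_inv[OF p2] witB_tr[OF p w] witB_tr[OF p2 w2]] .
      then show "V' = insert x S1" using V by simp
    qed
  next
    case noB: False
    show ?thesis
    proof (cases "\<exists>\<sigma> S U'. \<sigma> permutes A8 \<and> witA Z \<sigma> S U' \<and> \<not> S \<subseteq> S1")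
      case True
      then obtain \<sigma> S U' where p: "\<sigma> permutes A8" and w: "witA Z \<sigma> S U'" and nS: "\<not> S \<subseteq> S1" by blast
      have U': "U' = U" using AA[OF rcZ ccZ p p1 w w1] .
      obtain x where x: "x \<in> S" "x \<notin> S1" using nS by blast
      have xA: "x \<in> A8" using x w unfolding witA_def by auto
      have rx: "\<sigma> x \<in> U \<and> rowsZ Z x = U - {\<sigma> x}" using rowA[OF rcZ w x(1)] U' by simp
      show ?thesis
      proof (intro exI conjI allI impI)
        show "x \<in> A8" "x \<notin> S1" using xA x by auto
      next
        fix \<tau> S'' U'' assume pt: "\<tau> permutes A8" and wt: "witA Z \<tau> S'' U''"
        have U'': "U'' = U" using AA[OF rcZ ccZ pt p1 wt w1] .
        show "S'' \<subseteq> insert x S1"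
        proof
          fix t assume t: "t \<in> S''"
          show "t \<in> insert x S1"
          proof (cases "t \<in> S1")
            case False
            have tA: "t \<in> A8" using t wt unfolding witA_def by auto
            have rt: "\<tau> t \<in> U \<and> rowsZ Z t = U - {\<tau> t}" using rowA[OF rcZ wt t] U'' by simp
            have "t = x" using unique_extra[OF rcZ ccZ p1 w1 tA False _ _ xA x(2)] rt rx by blast
            then show ?thesis by simp
          qed simp
        qed
      next
        fix \<sigma> K V assume "\<sigma> permutes A8" "witB Z \<sigma> K V"
        then show "V = insert x S1" using noB by blast
      qed
    next
      case False
      have "\<not> A8 \<subseteq> S1"
      proof
        assume "A8 \<subseteq> S1" then have "card A8 \<le> card S1" using card_mono[OF fin8[OF SF(1)]] by blast
        then show False using SF by simp
      qed
      then obtain x where x: "x \<in> A8" "x \<notin> S1" by blast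
      show ?thesis
      proof (intro exI conjI allI impI)
        show "x \<in> A8" "x \<notin> S1" using x by auto
      next
        fix \<tau> S'' U'' assume "\<tau> permutes A8" "witA Z \<tau> S'' U''"
        then show "S'' \<subseteq> insert x S1" using False by blast
      next
        fix \<sigma> K V assume "\<sigma> permutes A8" "witB Z \<sigma> K V"
        then show "V = insert x S1" using noB by blast
      qed
    qed
  qed
  then obtain x where xA: "x \<in> A8" and xS: "x \<notin> S1"
    and HA: "\<And>\<sigma> S U'. \<sigma> permutes A8 \<Longrightarrow> witA Z \<sigma> S U' \<Longrightarrow> S \<subseteq> insert x S1"
    and HB: "\<And>\<sigma> K V. \<sigma> permutes A8 \<Longrightarrow> witB Z \<sigma> K V \<Longrightarrow> V = insert x S1" by blast
  obtain u where u: "U - \<sigma>1 ` S1 = {u}" using exists_u[OF rcZ ccZ p1 w1] by blast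
  have uA: "u \<in> A8" using u SF by auto
  define w where "w = inv \<sigma>1 u"
  have wA: "w \<in> A8" unfolding w_def using permutes_in_image[OF permutes_inv[OF p1]] uA by blast
  have w1u: "\<sigma>1 w = u" unfolding w_def using permutes_inverses[OF p1] by simp
  define \<sigma>0 where "\<sigma>0 = \<sigma>1 \<circ> transpose x w"
  have p0: "\<sigma>0 permutes A8" unfolding \<sigma>0_def by (rule permutes_compose[OF permutes_swap_id[OF xA wA] p1])
  have s0x: "\<sigma>0 x = u" unfolding \<sigma>0_def using w1u by simp
  have s0s: "\<sigma>0 s = \<sigma>1 s" if "s \<in> S1" for s
  proof -
    have "s \<noteq> x" using that xS by auto
    moreover have "s \<noteq> w" using that u w1u by auto
    ultimately show ?thesis unfolding \<sigma>0_def by (simp add: transpose_def)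
  qed
  let ?I = "insert x S1"
  have IA: "?I \<subseteq> A8" using xA SF by auto
  have cI: "card ?I = 5" using xS SF fin8[OF SF(1)] by simp
  have agree: "4 \<le> card {i\<in>?I. \<sigma> i = \<sigma>0 i}" if s: "\<sigma> \<in> WW Z" for \<sigma>
  proof -
    have p: "\<sigma> permutes A8" and "\<exists>S U. witA Z \<sigma> S U \<or> witB Z \<sigma> S U" using s unfolding WW_def by auto
    then obtain S U' where "witA Z \<sigma> S U' \<or> witB Z \<sigma> S U'" by blast
    then show ?thesis
    proof
      assume w: "witA Z \<sigma> S U'"
      have U': "U' = U" using AA[OF rcZ ccZ p p1 w w1] .
      have SI: "S \<subseteq> ?I" using HA[OF p w] .
      have "S \<subseteq> {i\<in>?I. \<sigma> i = \<sigma>0 i}"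
      proof
        fix t assume t: "t \<in> S"
        have rt: "\<sigma> t \<in> U \<and> rowsZ Z t = U - {\<sigma> t}" using rowA[OF rcZ w t] U' by simp
        have "\<sigma> t = \<sigma>0 t"
        proof (cases "t \<in> S1")
          case True
          have r1: "\<sigma>1 t \<in> U \<and> rowsZ Z t = U - {\<sigma>1 t}" using rowA[OF rcZ w1 True] .
          have "\<sigma> t = \<sigma>1 t" using rt r1 by blast
          then show ?thesis using s0s[OF True] by simp
        next
          case False
          have tA: "t \<in> A8" using t w unfolding witA_def by auto
          have "\<sigma> t \<notin> \<sigma>1 ` S1" using hole_extra[OF rcZ ccZ p1 w1 tA False] rt by blast
          then have "\<sigma> t = u" using u rt by blast
          moreover have "t = x" using SI t False by blast
          ultimately show ?thesis using s0x by simp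
        qed
        then show "t \<in> {i\<in>?I. \<sigma> i = \<sigma>0 i}" using SI t by blast
      qed
      then have "card S \<le> card {i\<in>?I. \<sigma> i = \<sigma>0 i}" by (rule card_mono[rotated]) (use IA fin8 in auto)
      then show ?thesis using w unfolding witA_def by simp
    next
      assume w: "witB Z \<sigma> S U'"
      have V: "U' = ?I" using HB[OF p w] .
      have KU: "S \<subseteq> U" using mixed[OF rcZ ccZ p1 p w1 w] by blast
      have SA: "S \<subseteq> A8" "card S = 4" using w unfolding witB_def by auto
      have "inv \<sigma> ` S \<subseteq> {i\<in>?I. \<sigma> i = \<sigma>0 i}"
      proof
        fix i assume "i \<in> inv \<sigma> ` S"
        then obtain c where c: "c \<in> S" and i: "i = inv \<sigma> c" by blast
        have cb: "inv \<sigma> c \<in> U' \<and> colZ Z c = U' - {inv \<sigma> c}" using colB[OF ccZ p w c] .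
        have si: "\<sigma> i = c" using i permutes_inverses[OF p] by simp
        have cU: "c \<in> U" using KU c by auto
        have iI: "i \<in> ?I" using cb V i by simp
        have "\<sigma>0 i = c"
        proof (cases "i \<in> S1")
          case True
          have iA: "i \<in> A8" using True SF by auto
          have "\<not> Z i c" using cb i iA unfolding colZ_def by auto
          then have "c \<notin> rowsZ Z i" unfolding rowsZ_def by auto
          then have "c = \<sigma>1 i" using rowA[OF rcZ w1 True] cU by blast
          then show ?thesis using s0s[OF True] by simp
        next
          case False
          then have ix: "i = x" using iI by simp
          have "c \<notin> \<sigma>1 ` S1"
          proof
            assume "c \<in> \<sigma>1 ` S1"
            then obtain s where s: "s \<in> S1" "c = \<sigma>1 s" by blast
            have "s \<in> colZ Z c" using cb V i s ix xS by auto
            then have "Z s c" unfolding colZ_def by auto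
            then have "c \<in> rowsZ Z s" using cU SF unfolding rowsZ_def by auto
            then show False using rowA[OF rcZ w1 s(1)] s(2) by auto
          qed
          then have "c = u" using u cU by blast
          then show ?thesis using ix s0x by simp
        qed
        then show "i \<in> {i\<in>?I. \<sigma> i = \<sigma>0 i}" using iI si by simp
      qed
      then have "card (inv \<sigma> ` S) \<le> card {i\<in>?I. \<sigma> i = \<sigma>0 i}" by (rule card_mono[rotated]) (use IA fin8 in auto)
      moreover have "card (inv \<sigma> ` S) = 4"
        using card_image[OF inj_on_subset[OF permutes_inj[OF permutes_inv[OF p]]]] SA by auto
      ultimately show ?thesis by simp
    qed
  qed
  show ?thesis using p0 IA cI agree by blast
qed




lemma main:
  assumes rcZ: "rc Z" and ccZ: "cc Z" and ne: "WW Z \<noteq> {}"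
  shows "\<exists>\<sigma>0 I. \<sigma>0 permutes A8 \<and> I \<subseteq> A8 \<and> card I = 5 \<and> (\<forall>\<sigma>\<in>WW Z. 4 \<le> card {i\<in>I. \<sigma> i = \<sigma>0 i})"
proof -
  obtain \<sigma>1 where s1: "\<sigma>1 \<in> WW Z" using ne by blast
  have p1: "\<sigma>1 permutes A8" and "\<exists>S U. witA Z \<sigma>1 S U \<or> witB Z \<sigma>1 S U" using s1 unfolding WW_def by auto
  then obtain S U where "witA Z \<sigma>1 S U \<or> witB Z \<sigma>1 S U" by blast
  then show ?thesis
  proof
    assume "witA Z \<sigma>1 S U" then show ?thesis using main_core[OF rcZ ccZ p1] by blast
  next
    assume w: "witB Z \<sigma>1 S U"
    have rct: "rc (tr Z)" "cc (tr Z)" using rcZ ccZ by (simp_all add: tr_simps)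
    obtain \<sigma>0' I' where p0': "\<sigma>0' permutes A8" and I'A: "I' \<subseteq> A8" and cI': "card I' = 5"
      and ag: "\<forall>\<sigma>\<in>WW (tr Z). 4 \<le> card {i\<in>I'. \<sigma> i = \<sigma>0' i}"
      using main_core[OF rct permutes_inv[OF p1] witB_tr[OF p1 w]] by blast
    show ?thesis
    proof (intro exI conjI ballI)
      show "inv \<sigma>0' permutes A8" using permutes_inv[OF p0'] .
      show "\<sigma>0' ` I' \<subseteq> A8" using I'A permutes_in_image[OF p0'] by auto
      show "card (\<sigma>0' ` I') = 5" using card_image[OF inj_on_subset[OF permutes_inj[OF p0']]] cI' by auto
    next
      fix \<sigma> assume s: "\<sigma> \<in> WW Z"
      have p: "\<sigma> permutes A8" using s unfolding WW_def by auto
      have a: "4 \<le> card {c\<in>I'. inv \<sigma> c = \<sigma>0' c}" using ag WW_tr[OF s] by blast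
      have "\<sigma>0' ` {c\<in>I'. inv \<sigma> c = \<sigma>0' c} \<subseteq> {i\<in>\<sigma>0' ` I'. \<sigma> i = inv \<sigma>0' i}"
      proof
        fix i assume "i \<in> \<sigma>0' ` {c\<in>I'. inv \<sigma> c = \<sigma>0' c}"
        then obtain c where c: "c \<in> I'" "inv \<sigma> c = \<sigma>0' c" "i = \<sigma>0' c" by blast
        have "\<sigma> i = c" using c permutes_inverses[OF p] by metis
        moreover have "inv \<sigma>0' i = c" using c permutes_inverses[OF p0'] by metis
        ultimately show "i \<in> {i\<in>\<sigma>0' ` I'. \<sigma> i = inv \<sigma>0' i}" using c by auto
      qed
      then have "card (\<sigma>0' ` {c\<in>I'. inv \<sigma> c = \<sigma>0' c}) \<le> card {i\<in>\<sigma>0' ` I'. \<sigma> i = inv \<sigma>0' i}"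
        by (rule card_mono[rotated]) (use I'A fin8 in auto)
      moreover have "card (\<sigma>0' ` {c\<in>I'. inv \<sigma> c = \<sigma>0' c}) = card {c\<in>I'. inv \<sigma> c = \<sigma>0' c}"
        using card_image[OF inj_on_subset[OF permutes_inj[OF p0']]] by blast
      ultimately show "4 \<le> card {i\<in>\<sigma>0' ` I'. \<sigma> i = inv \<sigma>0' i}" using a by simp
    qed
  qed
qed




lemma hall:
  fixes I :: "'a set" and F :: "'a \<Rightarrow> 'b set"
  assumes "finite I" "\<forall>i\<in>I. finite (F i)" "\<forall>J\<subseteq>I. card J \<le> card (\<Union>(F ` J))"
  shows "\<exists>f. inj_on f I \<and> (\<forall>i\<in>I. f i \<in> F i)"
  using assms
proof (induction "card I" arbitrary: I F rule: less_induct)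
  case less
  note finI = less.prems(1) and finF = less.prems(2) and H = less.prems(3)
  have IH: "\<exists>f. inj_on f I' \<and> (\<forall>i\<in>I'. f i \<in> F' i)"
    if "card I' < card I" "finite I'" "\<forall>i\<in>I'. finite (F' i)" "\<forall>J\<subseteq>I'. card J \<le> card (\<Union>(F' ` J))" for I' :: "'a set" and F' :: "'a \<Rightarrow> 'b set"
    by (rule less.hyps[OF that])
  show ?case
  proof (cases "I = {}")
    case True then show ?thesis by auto
  next
    case Ine: False
    show ?thesis
    proof (cases "\<exists>J. J \<subseteq> I \<and> J \<noteq> {} \<and> J \<noteq> I \<and> card (\<Union>(F ` J)) = card J")
      case True
      then obtain J where J: "J \<subseteq> I" "J \<noteq> {}" "J \<noteq> I" "card (\<Union>(F ` J)) = card J" by blast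
      have finJ: "finite J" using J(1) finI finite_subset by blast
      have "card J < card I" using J finI by (meson psubsetI psubset_card_mono)
      moreover have "\<forall>i\<in>J. finite (F i)" using finF J(1) by blast
      moreover have "\<forall>K\<subseteq>J. card K \<le> card (\<Union>(F ` K))" using H J(1) by blast
      ultimately obtain f1 where f1: "inj_on f1 J" "\<forall>i\<in>J. f1 i \<in> F i"
        using IH[of J F] finJ by blast
      define X where "X = \<Union>(F ` J)"
      have finX: "finite X" unfolding X_def using finJ finF J(1) by blast
      define F2 where "F2 = (\<lambda>i. F i - X)"
      have "card (I - J) = card I - card J" using card_Diff_subset[OF finJ J(1)] .
      moreover have "0 < card J" using finJ J(2) card_gt_0_iff by blast
      moreover have "card J \<le> card I" using card_mono[OF finI J(1)] .
      ultimately have "card (I - J) < card I" by linarith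
      moreover have H2: "\<forall>K\<subseteq>I - J. card K \<le> card (\<Union>(F2 ` K))"
      proof (intro allI impI)
        fix K assume K: "K \<subseteq> I - J"
        have finK: "finite K" using K finI finite_subset by blast
        have eq: "\<Union>(F2 ` K) = \<Union>(F ` (K \<union> J)) - X" unfolding F2_def X_def by auto
        have sub: "X \<subseteq> \<Union>(F ` (K \<union> J))" unfolding X_def by auto
        have finU: "finite (\<Union>(F ` (K \<union> J)))" using finK finJ finF K J(1) by auto
        have "K \<union> J \<subseteq> I" using K J(1) by blast
        then have "card (K \<union> J) \<le> card (\<Union>(F ` (K \<union> J)))" using H by blast
        moreover have "card (K \<union> J) = card K + card J" using K finK finJ by (subst card_Un_disjoint) auto
        moreover have "card (\<Union>(F2 ` K)) = card (\<Union>(F ` (K \<union> J))) - card X"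
          using eq card_Diff_subset[OF finX sub] by simp
        ultimately show "card K \<le> card (\<Union>(F2 ` K))" using J(4) unfolding X_def by linarith
      qed
      moreover have "\<forall>i\<in>I - J. finite (F2 i)" using finF unfolding F2_def by blast
      moreover have "finite (I - J)" using finI by blast
      ultimately obtain f2 where f2: "inj_on f2 (I - J)" "\<forall>i\<in>I - J. f2 i \<in> F2 i"
        using IH[of "I - J" F2] by blast
      define f where "f = (\<lambda>i. if i \<in> J then f1 i else f2 i)"
      have "inj_on f I"
      proof (rule inj_onI)
        fix a b assume a: "a \<in> I" and b: "b \<in> I" and e: "f a = f b"
        show "a = b"
        proof (cases "a \<in> J"; cases "b \<in> J")
          assume "a \<in> J" "b \<in> J" then show ?thesis using e f1 unfolding f_def by (auto dest: inj_onD)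
        next
          assume "a \<notin> J" "b \<notin> J" then show ?thesis using e f2 a b unfolding f_def by (auto dest: inj_onD)
        next
          assume ab: "a \<in> J" "b \<notin> J"
          then have "f a \<in> X" using f1 unfolding f_def X_def by auto
          moreover have "f b \<notin> X" using f2 ab b unfolding f_def F2_def by auto
          ultimately show ?thesis using e by simp
        next
          assume ab: "a \<notin> J" "b \<in> J"
          then have "f b \<in> X" using f1 unfolding f_def X_def by auto
          moreover have "f a \<notin> X" using f2 ab a unfolding f_def F2_def by auto
          ultimately show ?thesis using e by simp
        qed
      qed
      moreover have "\<forall>i\<in>I. f i \<in> F i" using f1 f2 unfolding f_def F2_def by auto
      ultimately show ?thesis by blast
    next
      case False
      obtain i0 where i0: "i0 \<in> I" using Ine by blast
      have "{i0} \<subseteq> I" using i0 by simp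
      then have "card {i0} \<le> card (\<Union>(F ` {i0}))" using H by blast
      then have "card {i0} \<le> card (F i0)" by simp
      then have "F i0 \<noteq> {}" by auto
      then obtain y where y: "y \<in> F i0" by blast
      define F2 where "F2 = (\<lambda>i. F i - {y})"
      have "card (I - {i0}) < card I" by (rule card_Diff1_less[OF finI i0])
      moreover have "\<forall>K\<subseteq>I - {i0}. card K \<le> card (\<Union>(F2 ` K))"
      proof (intro allI impI)
        fix K assume K: "K \<subseteq> I - {i0}"
        show "card K \<le> card (\<Union>(F2 ` K))"
        proof (cases "K = {}")
          case True then show ?thesis by simp
        next
          case Kne: False
          have finK: "finite K" using K finI finite_subset by blast
          have "K \<noteq> I" using K i0 by auto
          moreover have "K \<subseteq> I" using K by blast
          ultimately have "card (\<Union>(F ` K)) \<noteq> card K" using False Kne by blast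
          moreover have "card K \<le> card (\<Union>(F ` K))" using H K by auto
          ultimately have lt: "card K < card (\<Union>(F ` K))" by simp
          have "\<Union>(F2 ` K) = \<Union>(F ` K) - {y}" unfolding F2_def by auto
          moreover have "finite (\<Union>(F ` K))" using finK finF K by auto
          ultimately have "card (\<Union>(F2 ` K)) \<ge> card (\<Union>(F ` K)) - 1"
            by (simp add: card_Diff_singleton_if)
          then show ?thesis using lt by linarith
        qed
      qed
      moreover have "\<forall>i\<in>I - {i0}. finite (F2 i)" using finF unfolding F2_def by blast
      moreover have "finite (I - {i0})" using finI by blast
      ultimately obtain f2 where f2: "inj_on f2 (I - {i0})" "\<forall>i\<in>I - {i0}. f2 i \<in> F2 i"
        using IH[of "I - {i0}" F2] by blast
      define f where "f = f2(i0 := y)"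
      have "inj_on f I"
      proof -
        have "inj_on f (I - {i0})" using f2(1) unfolding f_def by (simp add: inj_on_def)
        moreover have "f i0 \<notin> f ` (I - {i0})" using f2(2) unfolding f_def F2_def by auto
        ultimately have "inj_on f (insert i0 (I - {i0}))" using inj_on_insert[of f i0 "I - {i0}"] by blast
        then show ?thesis using i0 by (simp add: insert_absorb)
      qed
      moreover have "\<forall>i\<in>I. f i \<in> F i" using f2(2) y unfolding f_def F2_def by auto
      ultimately show ?thesis by blast
    qed
  qed
qed




definition Zp :: "(nat \<Rightarrow> nat) \<Rightarrow> (nat \<Rightarrow> nat) \<Rightarrow> (nat \<Rightarrow> nat) \<Rightarrow> (nat \<Rightarrow> nat) \<Rightarrow> nat \<Rightarrow> nat \<Rightarrow> bool" where
  "Zp \<pi>1 \<pi>2 \<pi>3 \<pi>4 i c \<longleftrightarrow> c = \<pi>1 i \<or> c = \<pi>2 i \<or> c = \<pi>3 i \<or> c = \<pi>4 i"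

lemma card4: "card {a, b, c, d} \<le> (4::nat)"
  by (simp add: card_insert_if)

lemma rc_Zp: "rc (Zp \<pi>1 \<pi>2 \<pi>3 \<pi>4)"
  unfolding rc_def
proof
  fix i
  have "rowsZ (Zp \<pi>1 \<pi>2 \<pi>3 \<pi>4) i \<subseteq> {\<pi>1 i, \<pi>2 i, \<pi>3 i, \<pi>4 i}" unfolding rowsZ_def Zp_def by auto
  then have "card (rowsZ (Zp \<pi>1 \<pi>2 \<pi>3 \<pi>4) i) \<le> card {\<pi>1 i, \<pi>2 i, \<pi>3 i, \<pi>4 i}" by (rule card_mono[rotated]) auto
  then show "card (rowsZ (Zp \<pi>1 \<pi>2 \<pi>3 \<pi>4) i) \<le> 4" using card4[of "\<pi>1 i" "\<pi>2 i" "\<pi>3 i" "\<pi>4 i"] by linarith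
qed

lemma cc_Zp:
  assumes "\<pi>1 permutes A8" "\<pi>2 permutes A8" "\<pi>3 permutes A8" "\<pi>4 permutes A8"
  shows "cc (Zp \<pi>1 \<pi>2 \<pi>3 \<pi>4)"
  unfolding cc_def
proof
  fix c
  have "colZ (Zp \<pi>1 \<pi>2 \<pi>3 \<pi>4) c \<subseteq> {inv \<pi>1 c, inv \<pi>2 c, inv \<pi>3 c, inv \<pi>4 c}"
    unfolding colZ_def Zp_def using permutes_inverses(2)[OF assms(1)] permutes_inverses(2)[OF assms(2)]
      permutes_inverses(2)[OF assms(3)] permutes_inverses(2)[OF assms(4)] by auto
  then have "card (colZ (Zp \<pi>1 \<pi>2 \<pi>3 \<pi>4) c) \<le> card {inv \<pi>1 c, inv \<pi>2 c, inv \<pi>3 c, inv \<pi>4 c}" by (rule card_mono[rotated]) auto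
  then show "card (colZ (Zp \<pi>1 \<pi>2 \<pi>3 \<pi>4) c) \<le> 4" using card4[of "inv \<pi>1 c" "inv \<pi>2 c" "inv \<pi>3 c" "inv \<pi>4 c"] by linarith
qed

lemma bad_in_WW:
  assumes p: "\<pi>1 permutes A8" "\<pi>2 permutes A8" "\<pi>3 permutes A8" "\<pi>4 permutes A8"
    and bad: "bad_perm \<pi>1 \<pi>2 \<pi>3 \<pi>4 \<sigma>"
  shows "\<sigma> \<in> WW (Zp \<pi>1 \<pi>2 \<pi>3 \<pi>4)"
proof -
  let ?Z = "Zp \<pi>1 \<pi>2 \<pi>3 \<pi>4"
  have ps: "\<sigma> permutes A8" and nex: "\<not> (\<exists>\<tau>. \<tau> permutes A8 \<and> is_derangement_of 8 \<tau> \<pi>1 \<and> is_derangement_of 8 \<tau> \<pi>2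
          \<and> is_derangement_of 8 \<tau> \<pi>3 \<and> is_derangement_of 8 \<tau> \<pi>4 \<and> is_derangement_of 8 \<tau> \<sigma>)"
    using bad unfolding bad_perm_def by auto
  define F where "F = (\<lambda>i. {c\<in>A8. \<not> ?Z i c \<and> \<sigma> i \<noteq> c})"
  have "\<not> (\<forall>J\<subseteq>A8. card J \<le> card (\<Union>(F ` J)))"
  proof
    assume H: "\<forall>J\<subseteq>A8. card J \<le> card (\<Union>(F ` J))"
    obtain f where f: "inj_on f A8" "\<forall>i\<in>A8. f i \<in> F i"
      using hall[of A8 F] H unfolding F_def by auto
    have fA: "f ` A8 \<subseteq> A8" using f(2) unfolding F_def by auto
    have fA2: "f ` A8 = A8" using card_subset_eq[OF _ fA] card_image[OF f(1)] by simp
    define \<tau> where "\<tau> = (\<lambda>i. if i \<in> A8 then f i else i)"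
    have "bij_betw \<tau> A8 A8"
      unfolding bij_betw_def
    proof
      show "inj_on \<tau> A8" using f(1) unfolding \<tau>_def inj_on_def by auto
      show "\<tau> ` A8 = A8" using fA2 unfolding \<tau>_def by auto
    qed
    then have pt: "\<tau> permutes A8" by (rule bij_imp_permutes) (auto simp: \<tau>_def)
    have tv: "\<not> ?Z i (\<tau> i) \<and> \<sigma> i \<noteq> \<tau> i" if "i \<in> A8" for i using f(2) that unfolding \<tau>_def F_def by auto
    have "is_derangement_of 8 \<tau> \<pi>1 \<and> is_derangement_of 8 \<tau> \<pi>2
          \<and> is_derangement_of 8 \<tau> \<pi>3 \<and> is_derangement_of 8 \<tau> \<pi>4 \<and> is_derangement_of 8 \<tau> \<sigma>"
      unfolding is_derangement_of_def using tv unfolding Zp_def by (metis (full_types))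
    then show False using nex pt by blast
  qed
  then obtain J where J: "J \<subseteq> A8" and lt: "card (\<Union>(F ` J)) < card J" by (meson not_le)
  define N where "N = \<Union>(F ` J)"
  define U where "U = A8 - N"
  have NA: "N \<subseteq> A8" unfolding N_def F_def by auto
  have cU: "card U = 8 - card N" unfolding U_def using card_Diff_subset[OF fin8[OF NA] NA] by simp
  have cJ8: "card J \<le> 8" using card_mono[OF _ J] by simp
  have cN: "card N < card J" using lt unfolding N_def .
  have UA: "U \<subseteq> A8" unfolding U_def by auto
  have blk: "?Z s u \<or> \<sigma> s = u" if "s \<in> J" "u \<in> U" for s u
    using that unfolding U_def N_def F_def by auto
  have sum: "9 \<le> card J + card U" using cU cN cJ8 by linarith
  have "U \<noteq> {}" using cU cN cJ8 by auto
  then obtain u where u: "u \<in> U" by blast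
  have "J \<subseteq> insert (inv \<sigma> u) (colZ ?Z u)"
  proof
    fix s assume s: "s \<in> J"
    show "s \<in> insert (inv \<sigma> u) (colZ ?Z u)"
      using blk[OF s u] s J permutes_inv_eq[OF ps, of u s] unfolding colZ_def by auto
  qed
  then have "card J \<le> card (insert (inv \<sigma> u) (colZ ?Z u))" by (rule card_mono[rotated]) (simp add: fin_colZ)
  also have "\<dots> \<le> card (colZ ?Z u) + 1" by (simp add: card_insert_if fin_colZ)
  also have "\<dots> \<le> 5" using cc_Zp[OF p] u UA unfolding cc_def by auto
  finally have cJ: "card J \<le> 5" .
  have "J \<noteq> {}" using cN by auto
  then obtain s where s: "s \<in> J" by blast
  have "U \<subseteq> insert (\<sigma> s) (rowsZ ?Z s)"
  proof
    fix u assume u: "u \<in> U"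
    show "u \<in> insert (\<sigma> s) (rowsZ ?Z s)" using blk[OF s u] u UA unfolding rowsZ_def by auto
  qed
  then have "card U \<le> card (insert (\<sigma> s) (rowsZ ?Z s))" by (rule card_mono[rotated]) (simp add: fin_rowsZ)
  also have "\<dots> \<le> card (rowsZ ?Z s) + 1" by (simp add: card_insert_if fin_rowsZ)
  also have "\<dots> \<le> 5" using rc_Zp s J unfolding rc_def by auto
  finally have cU5: "card U \<le> 5" .
  show ?thesis
  proof (cases "card U = 5")
    case True
    obtain S where S: "S \<subseteq> J" "card S = 4" using obtain_subset_with_card_n[of 4 J] sum True by auto
    have "witA ?Z \<sigma> S U" unfolding witA_def using S J UA True blk by blast
    then show ?thesis unfolding WW_def using ps by blast
  next
    case False
    then have "card J = 5" "4 \<le> card U" using sum cJ cU5 by linarith+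
    obtain K where K: "K \<subseteq> U" "card K = 4" using obtain_subset_with_card_n[of 4 U] \<open>4 \<le> card U\<close> by auto
    have "witB ?Z \<sigma> K J" unfolding witB_def using K J UA \<open>card J = 5\<close> blk by blast
    then show ?thesis unfolding WW_def using ps by blast
  qed
qed

lemma permutes_fix: assumes "\<rho> permutes A" "\<forall>x\<in>T. \<rho> x = x" shows "\<rho> permutes (A - T)"
  using assms unfolding permutes_def by auto

lemma count96:
  assumes p0: "\<sigma>0 permutes A8" and IA: "I \<subseteq> A8" and cI: "card I = 5"
  shows "card {\<sigma>. \<sigma> permutes A8 \<and> 4 \<le> card {i\<in>I. \<sigma> i = \<sigma>0 i}} \<le> 96"
proof -
  define Q where "Q = {\<rho>. \<rho> permutes A8 \<and> 4 \<le> card {i\<in>I. \<rho> i = i}}"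
  define Oc where "Oc = A8 - I"
  define P0 where "P0 = {\<rho>. \<rho> permutes Oc}"
  define P where "P = (\<lambda>i. {\<rho>. \<rho> permutes (insert i Oc)})"
  have finOc: "finite Oc" unfolding Oc_def by simp
  have cOc: "card Oc = 3" unfolding Oc_def using card_Diff_subset[OF fin8[OF IA] IA] cI by simp
  have cP0: "card P0 = 6" unfolding P0_def using card_permutations[OF cOc finOc] by (simp add: fact_numeral)
  have cPi: "card (P i - P0) = 18" if "i \<in> I" for i
  proof -
    have "i \<notin> Oc" using that unfolding Oc_def by auto
    then have "card (insert i Oc) = 4" using cOc finOc by simp
    then have "card (P i) = 24" unfolding P_def using card_permutations[of "insert i Oc"] finOc by (simp add: fact_numeral)
    moreover have "P0 \<subseteq> P i" unfolding P0_def P_def using permutes_subset by blast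
    moreover have "finite P0" unfolding P0_def using finite_permutations[OF finOc] .
    ultimately show ?thesis using card_Diff_subset[of P0 "P i"] cP0 by simp
  qed
  have QS: "Q \<subseteq> P0 \<union> (\<Union>i\<in>I. P i - P0)"
  proof
    fix \<rho> assume "\<rho> \<in> Q"
    then have pr: "\<rho> permutes A8" and c4: "4 \<le> card {i\<in>I. \<rho> i = i}" unfolding Q_def by auto
    show "\<rho> \<in> P0 \<union> (\<Union>i\<in>I. P i - P0)"
    proof (cases "\<forall>i\<in>I. \<rho> i = i")
      case True
      then have "\<rho> permutes Oc" unfolding Oc_def by (rule permutes_fix[OF pr])
      then show ?thesis unfolding P0_def by blast
    next
      case False
      then obtain i where i: "i \<in> I" "\<rho> i \<noteq> i" by blast
      have sub: "{i\<in>I. \<rho> i = i} \<subseteq> I - {i}" using i by auto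
      have "card (I - {i}) = 4" using cI i fin8[OF IA] by simp
      then have eq: "{i\<in>I. \<rho> i = i} = I - {i}"
        using card_subset_eq[OF _ sub] c4 card_mono[OF _ sub] fin8[OF IA] by (metis finite_Diff le_antisym)
      then have "\<forall>x\<in>I - {i}. \<rho> x = x" by blast
      then have "\<rho> permutes (A8 - (I - {i}))" by (rule permutes_fix[OF pr])
      moreover have "A8 - (I - {i}) = insert i Oc" unfolding Oc_def using i IA by auto
      ultimately have "\<rho> \<in> P i" unfolding P_def by simp
      moreover have "\<rho> \<notin> P0"
      proof
        assume "\<rho> \<in> P0"
        then have "\<rho> permutes Oc" unfolding P0_def by simp
        moreover have "i \<notin> Oc" using i unfolding Oc_def by auto
        ultimately show False using i(2) permutes_not_in by metis
      qed
      ultimately show ?thesis using i by blast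
    qed
  qed
  have finI: "finite I" using fin8[OF IA] .
  have "card Q \<le> card (P0 \<union> (\<Union>i\<in>I. P i - P0))"
    by (rule card_mono[OF _ QS]) (simp add: P0_def P_def finite_permutations finOc finI)
  also have "\<dots> \<le> card P0 + card (\<Union>i\<in>I. P i - P0)" by (rule card_Un_le)
  also have "\<dots> \<le> card P0 + (\<Sum>i\<in>I. card (P i - P0))" using card_UN_le[OF finI, of "\<lambda>i. P i - P0"] by linarith
  also have "\<dots> = 6 + 5 * 18" using cP0 cPi cI by simp
  finally have cQ: "card Q \<le> 96" by simp
  define h where "h = (\<lambda>\<sigma>::nat\<Rightarrow>nat. inv \<sigma>0 \<circ> \<sigma>)"
  have "inj_on h {\<sigma>. \<sigma> permutes A8 \<and> 4 \<le> card {i\<in>I. \<sigma> i = \<sigma>0 i}}"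
  proof (rule inj_onI)
    fix a b assume "h a = h b"
    then have "\<sigma>0 \<circ> (inv \<sigma>0 \<circ> a) = \<sigma>0 \<circ> (inv \<sigma>0 \<circ> b)" unfolding h_def by simp
    then show "a = b" using permutes_inverses[OF p0] by (simp add: fun_eq_iff)
  qed
  moreover have "h ` {\<sigma>. \<sigma> permutes A8 \<and> 4 \<le> card {i\<in>I. \<sigma> i = \<sigma>0 i}} \<subseteq> Q"
  proof
    fix r assume "r \<in> h ` {\<sigma>. \<sigma> permutes A8 \<and> 4 \<le> card {i\<in>I. \<sigma> i = \<sigma>0 i}}"
    then obtain \<sigma> where s: "\<sigma> permutes A8" "4 \<le> card {i\<in>I. \<sigma> i = \<sigma>0 i}" and r: "r = h \<sigma>" by blast
    have "r permutes A8" unfolding r h_def by (rule permutes_compose[OF s(1) permutes_inv[OF p0]])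
    moreover have "{i\<in>I. r i = i} = {i\<in>I. \<sigma> i = \<sigma>0 i}"
      unfolding r h_def using permutes_inv_eq[OF p0] by (metis comp_apply)
    ultimately show "r \<in> Q" unfolding Q_def using s by simp
  qed
  moreover have "finite Q" unfolding Q_def using finite_permutations[of A8] by simp
  ultimately have "card {\<sigma>. \<sigma> permutes A8 \<and> 4 \<le> card {i\<in>I. \<sigma> i = \<sigma>0 i}} \<le> card Q"
    using card_inj_on_le by blast
  then show ?thesis using cQ by simp
qed

theorem mainTheorem15:
  assumes "\<pi>1 permutes {1..8::nat}" and "\<pi>2 permutes {1..8::nat}"
    and "\<pi>3 permutes {1..8::nat}" and "\<pi>4 permutes {1..8::nat}"
  shows "card {\<sigma>. bad_perm \<pi>1 \<pi>2 \<pi>3 \<pi>4 \<sigma>} \<le> 96 \<and>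
    (card {\<sigma>. bad_perm \<pi>1 \<pi>2 \<pi>3 \<pi>4 \<sigma>} > 24 \<longrightarrow>
      (\<exists>\<sigma>0 I. \<sigma>0 permutes {1..8::nat} \<and> I \<subseteq> {1..8} \<and> card I = 5 \<and>
        (\<forall>\<tau>. bad_perm \<pi>1 \<pi>2 \<pi>3 \<pi>4 \<tau> \<longrightarrow> card {i\<in>I. \<tau> i = \<sigma>0 i} \<ge> 4)))"
proof (cases "{\<sigma>. bad_perm \<pi>1 \<pi>2 \<pi>3 \<pi>4 \<sigma>} = {}")
  case True then show ?thesis by simp
next
  case False
  let ?Z = "Zp \<pi>1 \<pi>2 \<pi>3 \<pi>4"
  have sub: "{\<sigma>. bad_perm \<pi>1 \<pi>2 \<pi>3 \<pi>4 \<sigma>} \<subseteq> WW ?Z" using bad_in_WW[OF assms] by blast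
  then have "WW ?Z \<noteq> {}" using False by blast
  then obtain \<sigma>0 I where p0: "\<sigma>0 permutes A8" and IA: "I \<subseteq> A8" and cI: "card I = 5"
    and ag: "\<forall>\<sigma>\<in>WW ?Z. 4 \<le> card {i\<in>I. \<sigma> i = \<sigma>0 i}"
    using main[OF rc_Zp cc_Zp[OF assms]] by blast
  have sub2: "{\<sigma>. bad_perm \<pi>1 \<pi>2 \<pi>3 \<pi>4 \<sigma>} \<subseteq> {\<sigma>. \<sigma> permutes A8 \<and> 4 \<le> card {i\<in>I. \<sigma> i = \<sigma>0 i}}"
    using sub ag unfolding WW_def by blast
  have "card {\<sigma>. bad_perm \<pi>1 \<pi>2 \<pi>3 \<pi>4 \<sigma>} \<le> card {\<sigma>. \<sigma> permutes A8 \<and> 4 \<le> card {i\<in>I. \<sigma> i = \<sigma>0 i}}"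
    by (rule card_mono[OF _ sub2]) (rule finite_subset[OF _ finite_permutations[of A8]], auto)
  also have "\<dots> \<le> 96" by (rule count96[OF p0 IA cI])
  finally have "card {\<sigma>. bad_perm \<pi>1 \<pi>2 \<pi>3 \<pi>4 \<sigma>} \<le> 96" .
  moreover have "\<forall>\<tau>. bad_perm \<pi>1 \<pi>2 \<pi>3 \<pi>4 \<tau> \<longrightarrow> card {i\<in>I. \<tau> i = \<sigma>0 i} \<ge> 4" using sub ag by blast
  ultimately show ?thesis using p0 IA cI by blast
qed


end
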